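(* The family $\mathcal P$ of sets of $P$-sums contained in $[0,1]$ is not closed in $K([0,1])$ with respect to the Pompeiu–Hausdorff metric.
   Context: For a finite set $P\subset\mathbb R$ and a real sequence $(a_n)$ with $\sum_n|a_n|<\infty$, the set of $P$-sums is $\{\sum_{n\in\mathbb N}\xi_n a_n:\ \xi_n\in P \text{ for all } n\}$. $\mathcal P$ denotes the family of all sets $T\subset[0,1]$ that are sets of $P$-sums for some finite $P$ and some such sequence $(a_n)$. $K([0,1])$ is the family of non-empty compact subsets of $[0,1]$ with the Pompeiu–Hausdorff metric $d_H(A,B)=\max\{\sup_{a\in A}\operatorname{dist}(a,B),\sup_{b\in B}\operatorname{dist}(b,A)\}$. *)

theory Defs
  imports "HOL-Analysis.Analysis"
begin

definition Psums :: "real set \<Rightarrow> (nat \<Rightarrow> real) \<Rightarrow> real set" where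
  "Psums P a = {s. \<exists>\<xi>. (\<forall>n. \<xi> n \<in> P) \<and> s = (\<Sum>n. \<xi> n * a n)}"

definition Pfamily :: "real set set" where
  "Pfamily = {T. T \<subseteq> {0..1} \<and>
     (\<exists>P a. finite P \<and> P \<noteq> {} \<and> summable (\<lambda>n. \<bar>a n\<bar>) \<and> T = Psums P a)}"

definition Kunit :: "real set set" where
  "Kunit = {K. K \<noteq> {} \<and> compact K \<and> K \<subseteq> {0..1}}"

text \<open>Pompeiu--Hausdorff distance (used on nonempty compact sets, where the suprema are finite).\<close>
definition hausdist :: "real set \<Rightarrow> real set \<Rightarrow> real" where
  "hausdist A B = max (SUP a\<in>A. infdist a B) (SUP b\<in>B. infdist b A)"

end

theory Submission
  imports Defs
begin

lemma Psums_finite_case: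
  assumes "finite P" "summable (\<lambda>n. \<bar>a n\<bar>)" "infinite (Psums P a)"
  shows "\<exists>x y. x \<in> P \<and> y \<in> P \<and> x \<noteq> y"
    and "infinite {n. a n \<noteq> 0}"
proof -
  show "\<exists>x y. x \<in> P \<and> y \<in> P \<and> x \<noteq> y"
  proof (rule ccontr)
    assume "\<not> ?thesis"
    hence sub: "\<And>x y. x \<in> P \<Longrightarrow> y \<in> P \<Longrightarrow> x = y" by blast
    have "Psums P a \<subseteq> (\<lambda>c. \<Sum>n. c * a n) ` P"
    proof
      fix s assume "s \<in> Psums P a"
      then obtain \<xi> where x: "\<forall>n. \<xi> n \<in> P" "s = (\<Sum>n. \<xi> n * a n)" unfolding Psums_def by blast
      have "(\<lambda>n. \<xi> n * a n) = (\<lambda>n. \<xi> 0 * a n)"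
      proof (rule ext)
        fix n show "\<xi> n * a n = \<xi> 0 * a n" using sub[of "\<xi> n" "\<xi> 0"] x(1) by simp
      qed
      hence "s = (\<Sum>n. \<xi> 0 * a n)" using x(2) by simp
      thus "s \<in> (\<lambda>c. \<Sum>n. c * a n) ` P" using x(1) by blast
    qed
    thus False using assms(1,3) finite_subset by blast
  qed
  show "infinite {n. a n \<noteq> 0}"
  proof
    assume "finite {n. a n \<noteq> 0}"
    then obtain N where N: "{n. a n \<noteq> 0} \<subseteq> {..<N}" using finite_nat_bounded by blast
    have "Psums P a \<subseteq> (\<lambda>f. \<Sum>n<N. f n * a n) ` (PiE {..<N} (\<lambda>_. P))"
    proof
      fix s assume "s \<in> Psums P a"
      then obtain \<xi> where x: "\<forall>n. \<xi> n \<in> P" "s = (\<Sum>n. \<xi> n * a n)" unfolding Psums_def by blast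
      have "s = (\<Sum>n<N. \<xi> n * a n)" unfolding x(2)
        by (rule suminf_finite) (use N in auto)
      also have "\<dots> = (\<Sum>n<N. restrict \<xi> {..<N} n * a n)" by simp
      finally show "s \<in> (\<lambda>f. \<Sum>n<N. f n * a n) ` (PiE {..<N} (\<lambda>_. P))"
        using x(1) by (intro image_eqI[of _ _ "restrict \<xi> {..<N}"]) auto
    qed
    moreover have "finite (PiE {..<N} (\<lambda>_. P))" using assms(1) by (simp add: finite_PiE)
    ultimately show False using assms(3) finite_subset by blast
  qed
qed

lemma Psums_perfect:
  assumes "finite P" "summable (\<lambda>n. \<bar>a n\<bar>)" "infinite (Psums P a)"
    and "s \<in> Psums P a" and "e > 0"
  shows "\<exists>s'\<in>Psums P a. s' \<noteq> s \<and> \<bar>s' - s\<bar> < e"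
proof -
  obtain \<xi> where x: "\<forall>n. \<xi> n \<in> P" "s = (\<Sum>n. \<xi> n * a n)"
    using assms(4) unfolding Psums_def by blast
  obtain p q where pq: "p \<in> P" "q \<in> P" "p \<noteq> q" using Psums_finite_case(1)[OF assms(1-3)] by blast
  have inf: "infinite {n. a n \<noteq> 0}" using Psums_finite_case(2)[OF assms(1-3)] .
  define M where "M = (\<Sum>x\<in>P. \<bar>x\<bar>)"
  have M: "\<And>x. x \<in> P \<Longrightarrow> \<bar>x\<bar> \<le> M" unfolding M_def
    using assms(1) by (intro member_le_sum) auto
  have M0: "M \<ge> 0" using M pq(1) by force
  have "(\<lambda>n. \<bar>a n\<bar>) \<longlonglongrightarrow> 0" using summable_LIMSEQ_zero[OF assms(2)] .
  moreover have "e / (2*M+1) > 0" using assms(5) M0 by simp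
  ultimately obtain N where N0: "\<forall>n\<ge>N. norm (\<bar>a n\<bar> - 0) < e / (2*M+1)"
    using LIMSEQ_D by blast
  have N: "\<And>n. n \<ge> N \<Longrightarrow> \<bar>a n\<bar> < e / (2*M+1)" using N0 by simp
  obtain n where n: "n \<ge> N" "a n \<noteq> 0"
    using inf unfolding infinite_nat_iff_unbounded_le by blast
  obtain r where r: "r \<in> P" "r \<noteq> \<xi> n"
  proof (cases "p = \<xi> n")
    case True thus ?thesis using that pq by blast
  next
    case False thus ?thesis using that pq by blast
  qed
  define \<eta> where "\<eta> = \<xi>(n := r)"
  have s1: "summable (\<lambda>m. \<xi> m * a m)"
    by (rule summable_comparison_test[of _ "\<lambda>m. M * \<bar>a m\<bar>"])
       (use x(1) M assms(2) in \<open>auto simp: abs_mult intro!: mult_right_mono summable_mult\<close>)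
  have s2: "summable (\<lambda>m. if m = n then (r - \<xi> n) * a n else 0)"
    by (rule summable_finite[of "{n}"]) auto
  have eq: "(\<lambda>m. \<eta> m * a m) = (\<lambda>m. \<xi> m * a m + (if m = n then (r - \<xi> n) * a n else 0))"
    unfolding \<eta>_def by (auto simp: algebra_simps)
  have "(\<Sum>m. \<eta> m * a m) = s + (\<Sum>m. if m = n then (r - \<xi> n) * a n else 0)"
    unfolding eq x(2) by (rule suminf_add[OF s1 s2, symmetric])
  also have "(\<Sum>m. if m = n then (r - \<xi> n) * a n else 0) = (r - \<xi> n) * a n"
    by (subst suminf_finite[of "{n}"]) auto
  finally have sum: "(\<Sum>m. \<eta> m * a m) = s + (r - \<xi> n) * a n" .
  have mem: "(\<Sum>m. \<eta> m * a m) \<in> Psums P a"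
    unfolding Psums_def \<eta>_def using x(1) r(1)
    by (intro CollectI exI[of _ "\<xi>(n := r)"]) auto
  have ne: "(r - \<xi> n) * a n \<noteq> 0" using r n by simp
  have "\<bar>r - \<xi> n\<bar> \<le> 2*M" using M[OF r(1)] M[OF x(1)[rule_format, of n]] by linarith
  hence "\<bar>(r - \<xi> n) * a n\<bar> \<le> 2*M * \<bar>a n\<bar>" by (simp add: abs_mult mult_right_mono)
  also have "\<dots> \<le> (2*M+1) * \<bar>a n\<bar>" by (simp add: mult_right_mono)
  also have "\<dots> < (2*M+1) * (e / (2*M+1))" using N[OF n(1)] M0 by (intro mult_strict_left_mono) auto
  also have "\<dots> = e" using M0 by simp
  finally show ?thesis using mem ne sum by (intro bexI[of _ "\<Sum>m. \<eta> m * a m"]) auto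
qed

definition uu :: "nat \<Rightarrow> real" where "uu n = 1 / (real n + 1)"

definition KK :: "real set" where "KK = insert 0 (range uu)"

lemma uu_pos: "uu n > 0" and uu_le1: "uu n \<le> 1" by (auto simp: uu_def)

lemma uu_inj: "inj uu" by (auto simp: inj_def uu_def)

lemma uu_lim: "uu \<longlonglongrightarrow> 0"
  unfolding uu_def using LIMSEQ_inverse_real_of_nat by (simp add: inverse_eq_divide add.commute)

lemma KK_Kunit: "KK \<in> Kunit"
  unfolding Kunit_def KK_def using compact_sequence_with_limit[OF uu_lim] uu_pos[THEN less_imp_le] uu_le1
  by auto

lemma KK_not: "KK \<notin> Pfamily"
proof
  assume "KK \<in> Pfamily"
  then obtain P a where Pa: "finite P" "summable (\<lambda>n. \<bar>a n\<bar>)" "KK = Psums P a"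
    unfolding Pfamily_def by blast
  have inf: "infinite (Psums P a)" unfolding Pa(3)[symmetric] KK_def
    using range_inj_infinite[OF uu_inj] by simp
  have "1 \<in> Psums P a" unfolding Pa(3)[symmetric] KK_def
    by (rule insertI2, rule range_eqI[of _ _ 0]) (simp add: uu_def)
  from Psums_perfect[OF Pa(1,2) inf this, of "1/2"]
  obtain s where s: "s \<in> KK" "s \<noteq> 1" "\<bar>s - 1\<bar> < 1/2" using Pa(3) by auto
  show False
  proof (cases "s = 0")
    case True thus False using s by simp
  next
    case False
    then obtain n where n: "s = uu n" using s(1) unfolding KK_def by auto
    have "n \<noteq> 0" using s(2) n by (auto simp: uu_def)
    hence "uu n \<le> 1/2" by (auto simp: uu_def divide_simps)
    thus False using s(3) n by simp
  qed
qed

lemma approx: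
  assumes "e > 0"
  shows "\<exists>T \<in> Pfamily. hausdist T KK < e"
proof -
  obtain N where N: "uu N < e" using uu_lim assms
  proof -
    obtain no where "\<forall>n\<ge>no. norm (uu n - 0) < e" using LIMSEQ_D[OF uu_lim assms] by blast
    hence "uu no < e" using uu_pos[of no] by auto
    thus ?thesis using that by blast
  qed
  define T where "T = insert 0 (uu ` {..<N})"
  have TK: "T \<subseteq> KK" unfolding T_def KK_def by auto
  define a :: "nat \<Rightarrow> real" where "a = (\<lambda>n. if n = 0 then 1 else 0)"
  have ps: "Psums T a = T"
  proof -
    have e: "\<And>\<xi>. (\<Sum>n. \<xi> n * a n) = \<xi> 0"
      by (subst suminf_finite[of "{0}"]) (auto simp: a_def)
    show ?thesis
    proof
      show "Psums T a \<subseteq> T" unfolding Psums_def e by auto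
      show "T \<subseteq> Psums T a"
      proof
        fix t assume "t \<in> T"
        thus "t \<in> Psums T a" unfolding Psums_def e by (intro CollectI exI[of _ "\<lambda>_. t"]) auto
      qed
    qed
  qed
  have "T \<in> Pfamily" unfolding Pfamily_def
  proof (intro CollectI conjI exI)
    show "T \<subseteq> {0..1}" using TK KK_Kunit unfolding Kunit_def by blast
    show "finite T" "T \<noteq> {}" unfolding T_def by auto
    show "summable (\<lambda>n. \<bar>a n\<bar>)" by (rule summable_finite[of "{0}"]) (auto simp: a_def)
    show "T = Psums T a" using ps by simp
  qed
  moreover have "hausdist T KK < e"
  proof -
    have 1: "(SUP x\<in>T. infdist x KK) \<le> uu N"
      by (rule cSUP_least) (use TK uu_pos[of N] in \<open>auto simp: T_def infdist_zero subset_iff\<close>)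
    have 2: "(SUP x\<in>KK. infdist x T) \<le> uu N"
    proof (rule cSUP_least)
      show "KK \<noteq> {}" unfolding KK_def by auto
      fix x assume "x \<in> KK"
      then consider "x \<in> T" | n where "x = uu n" "n \<ge> N" 
      proof -
        assume c1: "x \<in> T \<Longrightarrow> thesis" and c2: "\<And>n. x = uu n \<Longrightarrow> n \<ge> N \<Longrightarrow> thesis"
        have "x = 0 \<or> (\<exists>n. x = uu n)" using \<open>x \<in> KK\<close> unfolding KK_def by auto
        thus thesis
        proof
          assume "x = 0" thus thesis using c1 unfolding T_def by blast
        next
          assume "\<exists>n. x = uu n"
          then obtain n where n: "x = uu n" by blast
          show thesis
          proof (cases "n < N")
            case True thus thesis using c1 n unfolding T_def by blast
          next
            case False thus thesis using c2 n by simp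
          qed
        qed
      qed
      thus "infdist x T \<le> uu N"
      proof cases
        case 1 thus ?thesis using uu_pos[of N] by simp
      next
        case 2
        have "infdist x T \<le> dist x 0" by (rule infdist_le) (simp add: T_def)
        also have "\<dots> = uu n" using 2 uu_pos[of n] by simp
        also have "\<dots> \<le> uu N" using 2 by (simp add: uu_def frac_le)
        finally show ?thesis .
      qed
    qed
    show ?thesis unfolding hausdist_def using 1 2 N by simp
  qed
  ultimately show ?thesis by blast
qed

theorem mainTheorem14:
  shows "\<exists>K \<in> Kunit. K \<notin> Pfamily \<and>
           (\<forall>\<epsilon>>0. \<exists>T \<in> Pfamily. hausdist T K < \<epsilon>)"
  using KK_Kunit KK_not approx by blast

end
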